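(* For any set $\mathscr X$ disjoint from $\tau$, the $\bar\tau$-algebra $\mathcal N_{\bar\tau}(\mathscr X)$ is an infinitary clone $\tau$-algebra, and it is the free infinitary clone $\tau$-algebra over the set $\dot{\mathscr X}=\{\dot x: x\in\mathscr X\}$ of generators: for every infinitary clone $\tau$-algebra $\mathcal C$ and every function $\alpha:\dot{\mathscr X}\to C$ there is a unique homomorphism $\mathcal N_{\bar\tau}(\mathscr X)\to\mathcal C$ extending $\alpha$. In particular, $\mathcal N_{\bar\tau}=\mathcal N_{\bar\tau}(\emptyset)$ is initial among infinitary clone $\tau$-algebras.
   Context: $\tau$ is a set of $\omega$-ary operation symbols disjoint from $\{q\}\cup\{e_i:i\in\omega\}$. $\bar\tau$ is the type with nullary $e_i$ ($i\in\omega$), nullary $f$ for each $f\in\tau$, and $\omega$-ary $q$. An infinitary clone $\tau$-algebra is a $\bar\tau$-algebra satisfying (N1) $q(e_i,x_0,x_1,\dots)=x_i$; (N2) $q(x,e_0,e_1,\dots)=x$; (N3) $q(q(x,y_0,y_1,\dots),\boldsymbol z)=q(x,q(y_0,\boldsymbol z),q(y_1,\boldsymbol z),\dots)$. Metaterms: $N_{\bar\tau}(\mathscr X)$ is the smallest set containing the symbols $e_0,e_1,\dots$ and containing $w(t_0,t_1,\dots)$ whenever $w\in\tau\cup\mathscr X$ and $t_0,t_1,\dots\in N_{\bar\tau}(\mathscr X)$ (well-founded countably branching terms, every symbol of $\tau\cup\mathscr X$ being treated as $\omega$-ary). $\mathcal N_{\bar\tau}(\mathscr X)$ is the $\bar\tau$-algebra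 on $N_{\bar\tau}(\mathscr X)$ with $e_i\mapsto e_i$, $f\mapsto f(e_0,e_1,\dots)$ for $f\in\tau$, and $q$ defined by recursion on the first argument: $q(e_i,t_0,t_1,\dots)=t_i$ and $q(w(t_0,t_1,\dots),\boldsymbol u)=w(q(t_0,\boldsymbol u),q(t_1,\boldsymbol u),\dots)$ for $w\in\tau\cup\mathscr X$. For $x\in\mathscr X$, $\dot x=x(e_0,e_1,\dots)$. *)

theory Defs
  imports Main
begin

text \<open>A node is labelled by a
symbol of \<tau> (type 'f, tag Inl) or of \<X> (type 'x, tag Inr); the sum type makes
\<tau> and \<X> disjoint.  Leaves are the symbols e_i.\<close>

datatype ('f, 'x) mterm = Ev nat | App "'f + 'x" "nat \<Rightarrow> ('f, 'x) mterm"

primrec mt_ok :: "'f set \<Rightarrow> 'x set \<Rightarrow> ('f, 'x) mterm \<Rightarrow> bool" where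
  "mt_ok T X (Ev i) = True"
| "mt_ok T X (App w ts) = (w \<in> Inl ` T \<union> Inr ` X \<and> (\<forall>i. mt_ok T X (ts i)))"

primrec mt_q :: "('f, 'x) mterm \<Rightarrow> (nat \<Rightarrow> ('f, 'x) mterm) \<Rightarrow> ('f, 'x) mterm" where
  "mt_q (Ev i) u = u i"
| "mt_q (App w ts) u = App w (\<lambda>i. mt_q (ts i) u)"

record ('a, 'f) tbar_alg =
  acar :: "'a set"
  ae :: "nat \<Rightarrow> 'a"
  aconst :: "'f \<Rightarrow> 'a"
  aq :: "'a \<Rightarrow> (nat \<Rightarrow> 'a) \<Rightarrow> 'a"

definition tbar_algebra :: "'f set \<Rightarrow> ('a, 'f) tbar_alg \<Rightarrow> bool" where
  "tbar_algebra T A \<longleftrightarrow>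
     (\<forall>i. ae A i \<in> acar A) \<and> (\<forall>f\<in>T. aconst A f \<in> acar A) \<and>
     (\<forall>x\<in>acar A. \<forall>ys. (\<forall>i. ys i \<in> acar A) \<longrightarrow> aq A x ys \<in> acar A)"

definition inf_clone_alg :: "'f set \<Rightarrow> ('a, 'f) tbar_alg \<Rightarrow> bool" where
  "inf_clone_alg T A \<longleftrightarrow> tbar_algebra T A \<and>
     (\<forall>i xs. (\<forall>j. xs j \<in> acar A) \<longrightarrow> aq A (ae A i) xs = xs i) \<and>
     (\<forall>x\<in>acar A. aq A x (ae A) = x) \<and>
     (\<forall>x\<in>acar A. \<forall>ys zs. (\<forall>i. ys i \<in> acar A) \<longrightarrow> (\<forall>i. zs i \<in> acar A) \<longrightarrow>
        aq A (aq A x ys) zs = aq A x (\<lambda>i. aq A (ys i) zs))"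

definition tbar_hom :: "'f set \<Rightarrow> ('a, 'f) tbar_alg \<Rightarrow> ('b, 'f) tbar_alg \<Rightarrow> ('a \<Rightarrow> 'b) \<Rightarrow> bool" where
  "tbar_hom T A B h \<longleftrightarrow>
     (\<forall>x\<in>acar A. h x \<in> acar B) \<and>
     (\<forall>i. h (ae A i) = ae B i) \<and>
     (\<forall>f\<in>T. h (aconst A f) = aconst B f) \<and>
     (\<forall>x\<in>acar A. \<forall>ys. (\<forall>i. ys i \<in> acar A) \<longrightarrow> h (aq A x ys) = aq B (h x) (\<lambda>i. h (ys i)))"

definition NX :: "'f set \<Rightarrow> 'x set \<Rightarrow> (('f, 'x) mterm, 'f) tbar_alg" where
  "NX T X = \<lparr> acar = {t. mt_ok T X t}, ae = Ev, aconst = (\<lambda>f. App (Inl f) Ev), aq = mt_q \<rparr>"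

definition dotx :: "'x \<Rightarrow> ('f, 'x) mterm" where
  "dotx x = App (Inr x) Ev"

end

theory Submission
  imports Defs
begin

primrec hh :: "('a, 'f) tbar_alg \<Rightarrow> (('f, 'x) mterm \<Rightarrow> 'a) \<Rightarrow> ('f, 'x) mterm \<Rightarrow> 'a" where
  "hh C a (Ev i) = ae C i"
| "hh C a (App w ts) = aq C (case w of Inl f \<Rightarrow> aconst C f | Inr x \<Rightarrow> a (dotx x)) (\<lambda>i. hh C a (ts i))"

lemma mt_ok_q: "mt_ok T X t \<Longrightarrow> (\<forall>i. mt_ok T X (u i)) \<Longrightarrow> mt_ok T X (mt_q t u)"
  by (induction t) auto

lemma mt_q_Ev: "mt_q t Ev = t"
  by (induction t) auto

lemma mt_q_assoc: "mt_q (mt_q t ys) zs = mt_q t (\<lambda>i. mt_q (ys i) zs)"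
  by (induction t) auto

lemma hh_car:
  assumes C: "inf_clone_alg T C" and a: "a ` (dotx ` X) \<subseteq> acar C"
  shows "mt_ok T X t \<Longrightarrow> hh C a t \<in> acar C"
proof (induction t)
  case (Ev i) then show ?case using C by (simp add: inf_clone_alg_def tbar_algebra_def)
next
  case (App w ts)
  have c: "(case w of Inl f \<Rightarrow> aconst C f | Inr x \<Rightarrow> a (dotx x)) \<in> acar C"
    using App.prems C a by (cases w) (auto simp: inf_clone_alg_def tbar_algebra_def)
  have "\<forall>i. hh C a (ts i) \<in> acar C" using App by auto
  then show ?case using c C by (simp add: inf_clone_alg_def tbar_algebra_def)
qed

lemma hh_q:
  assumes C: "inf_clone_alg T C" and a: "a ` (dotx ` X) \<subseteq> acar C"
  shows "mt_ok T X t \<Longrightarrow> (\<forall>i. mt_ok T X (u i)) \<Longrightarrow>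
    hh C a (mt_q t u) = aq C (hh C a t) (\<lambda>i. hh C a (u i))"
proof (induction t)
  case (Ev i)
  have "\<forall>j. hh C a (u j) \<in> acar C" using Ev hh_car[OF C a] by auto
  then show ?case using C by (simp add: inf_clone_alg_def)
next
  case (App w ts)
  define c where "c = (case w of Inl f \<Rightarrow> aconst C f | Inr x \<Rightarrow> a (dotx x))"
  have c: "c \<in> acar C"
    using App.prems C a unfolding c_def by (cases w) (auto simp: inf_clone_alg_def tbar_algebra_def)
  have t: "\<forall>i. hh C a (ts i) \<in> acar C" using App hh_car[OF C a] by auto
  have u: "\<forall>j. hh C a (u j) \<in> acar C" using App hh_car[OF C a] by auto
  have "hh C a (mt_q (App w ts) u) = aq C c (\<lambda>i. aq C (hh C a (ts i)) (\<lambda>i. hh C a (u i)))"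
    using App by (simp add: c_def)
  also have "\<dots> = aq C (aq C c (\<lambda>i. hh C a (ts i))) (\<lambda>i. hh C a (u i))"
    using C c t u unfolding inf_clone_alg_def by auto
  finally show ?case by (simp add: c_def)
qed

theorem proposition4p3:
  fixes T :: "'f set" and X :: "'x set"
  shows "inf_clone_alg T (NX T X) \<and>
    (\<forall>(C :: ('a, 'f) tbar_alg) (\<alpha> :: ('f, 'x) mterm \<Rightarrow> 'a).
       inf_clone_alg T C \<longrightarrow> \<alpha> ` (dotx ` X) \<subseteq> acar C \<longrightarrow>
       (\<exists>h. tbar_hom T (NX T X) C h \<and> (\<forall>x\<in>X. h (dotx x) = \<alpha> (dotx x)) \<and>
            (\<forall>h'. tbar_hom T (NX T X) C h' \<and> (\<forall>x\<in>X. h' (dotx x) = \<alpha> (dotx x)) \<longrightarrow>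
                  (\<forall>t\<in>acar (NX T X). h' t = h t))))"
proof (intro conjI allI impI)
  show "inf_clone_alg T (NX T X)"
    by (auto simp: inf_clone_alg_def tbar_algebra_def NX_def mt_ok_q mt_q_Ev mt_q_assoc)
next
  fix C :: "('a, 'f) tbar_alg" and a :: "('f, 'x) mterm \<Rightarrow> 'a"
  assume C: "inf_clone_alg T C" and a: "a ` (dotx ` X) \<subseteq> acar C"
  have N2: "\<And>x. x \<in> acar C \<Longrightarrow> aq C x (ae C) = x" using C by (simp add: inf_clone_alg_def)
  have hom: "tbar_hom T (NX T X) C (hh C a)"
    unfolding tbar_hom_def
  proof (intro conjI ballI allI impI)
    fix f assume "f \<in> T"
    then have "aconst C f \<in> acar C" using C by (simp add: inf_clone_alg_def tbar_algebra_def)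
    then show "hh C a (aconst (NX T X) f) = aconst C f" by (simp add: NX_def N2)
  qed (auto simp: NX_def hh_car[OF C a] hh_q[OF C a])
  show "\<exists>h. tbar_hom T (NX T X) C h \<and> (\<forall>x\<in>X. h (dotx x) = a (dotx x)) \<and>
            (\<forall>h'. tbar_hom T (NX T X) C h' \<and> (\<forall>x\<in>X. h' (dotx x) = a (dotx x)) \<longrightarrow>
                  (\<forall>t\<in>acar (NX T X). h' t = h t))"
  proof (intro exI conjI ballI allI impI)
    show "tbar_hom T (NX T X) C (hh C a)" by (rule hom)
  next
    fix x assume "x \<in> X"
    then have "a (dotx x) \<in> acar C" using a by auto
    then show "hh C a (dotx x) = a (dotx x)" by (simp add: dotx_def N2)
  next
    fix h' t
    assume H: "tbar_hom T (NX T X) C h' \<and> (\<forall>x\<in>X. h' (dotx x) = a (dotx x))"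
      and t: "t \<in> acar (NX T X)"
    have hq: "\<And>s u. mt_ok T X s \<Longrightarrow> (\<forall>i. mt_ok T X (u i)) \<Longrightarrow> h' (mt_q s u) = aq C (h' s) (\<lambda>i. h' (u i))"
      using H by (simp add: tbar_hom_def NX_def)
    have he: "\<And>i. h' (Ev i) = ae C i" using H by (simp add: tbar_hom_def NX_def)
    have hc: "\<And>f. f \<in> T \<Longrightarrow> h' (App (Inl f) Ev) = aconst C f" using H by (simp add: tbar_hom_def NX_def)
    have hx: "\<And>x. x \<in> X \<Longrightarrow> h' (App (Inr x) Ev) = a (dotx x)" using H by (simp add: dotx_def)
    have "mt_ok T X t" using t by (simp add: NX_def)
    then show "h' t = hh C a t"
    proof (induction t)
      case (Ev i) then show ?case by (simp add: he)
    next
      case (App w ts)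
      have eq: "App w ts = mt_q (App w Ev) ts" by simp
      have ok: "mt_ok T X (App w Ev)" "\<forall>i. mt_ok T X (ts i)" using App.prems by auto
      have "h' (App w ts) = aq C (h' (App w Ev)) (\<lambda>i. h' (ts i))"
        by (subst eq, rule hq[OF ok])
      also have "\<dots> = aq C (h' (App w Ev)) (\<lambda>i. hh C a (ts i))"
        using App ok by auto
      finally show ?case using App.prems hc hx by (cases w) auto
    qed
  qed
qed

end
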